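(* Let $l\ge 3$, $\mathfrak g=\mathfrak{sl}_{l+1}(\mathbb C)$, $v'_{l,1}=e_{\epsilon_1-\epsilon_{l+1}}e_{\epsilon_2-\epsilon_l}-e_{\epsilon_2-\epsilon_{l+1}}e_{\epsilon_1-\epsilon_l}\in U(\mathfrak g)$, $R$ the adjoint $\mathfrak g$-submodule of $U(\mathfrak g)$ generated by $v'_{l,1}$, $R_0$ its zero-weight subspace, and $\mathcal P_0=\{p_r : r\in R_0\}$. Define polynomials in $h_1,\dots,h_l$: (1) $p_{ij}(h)=h_ih_j$ for $i=1,\dots,l-2$ and $j$ with $j-i\ge 2$ (and $j\le l$); (2) $q_i(h)=h_i(h_{i-1}+h_i+h_{i+1}+1)$ for $i=2,\dots,l-1$. Then all $p_{ij}$ and $q_i$ belong to $\mathcal P_0$.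
   Context: $\mathfrak g=\mathfrak{sl}_{l+1}(\mathbb C)$ with Cartan subalgebra $\mathfrak h$ of traceless diagonal matrices, triangular decomposition $\mathfrak g=\mathfrak n_-\oplus\mathfrak h\oplus\mathfrak n_+$ ($\mathfrak n_+$ strictly upper triangular), simple roots $\alpha_i=\epsilon_i-\epsilon_{i+1}$. For $i<j$: $e_{\epsilon_i-\epsilon_j}=(-1)^{j-i-1}E_{ij}$, $f_{\epsilon_i-\epsilon_j}=(-1)^{j-i-1}E_{ji}$, $h_{\epsilon_i-\epsilon_j}=E_{ii}-E_{jj}$, $h_i=h_{\alpha_i}$. The adjoint action is $X_L f=[X,f]$. For $r\in R_0$, $p_r$ denotes the unique element of $S(\mathfrak h)=\mathbb C[h_1,\dots,h_l]$ with $r-p_r\in U(\mathfrak g)\mathfrak n_+$; equivalently $r v_\mu=p_r(\mu)v_\mu$ for every highest weight vector $v_\mu$ of weight $\mu\in\mathfrak h^*$ (polynomials are evaluated at $\mu$ via $h_i\mapsto\mu(h_i)$). *)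

theory Defs
  imports Complex_Main
begin

text \<open>Matrices of size (l+1)x(l+1), indices 1..l+1, as functions with support in that range.\<close>
type_synonym mat = "nat \<Rightarrow> nat \<Rightarrow> complex"

definition sl :: "nat \<Rightarrow> mat set" where
  "sl l = {A. (\<forall>i j. A i j \<noteq> 0 \<longrightarrow> i \<in> {1..l+1} \<and> j \<in> {1..l+1})
              \<and> (\<Sum>i=1..l+1. A i i) = 0}"

definition madd :: "mat \<Rightarrow> mat \<Rightarrow> mat" where
  "madd A B = (\<lambda>i j. A i j + B i j)"

definition msc :: "complex \<Rightarrow> mat \<Rightarrow> mat" where
  "msc c A = (\<lambda>i j. c * A i j)"

definition mbr :: "nat \<Rightarrow> mat \<Rightarrow> mat \<Rightarrow> mat" where
  "mbr l A B = (\<lambda>i j. (\<Sum>k=1..l+1. A i k * B k j - B i k * A k j))"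

definition Emat :: "nat \<Rightarrow> nat \<Rightarrow> mat" where
  "Emat a b = (\<lambda>i j. if i = a \<and> j = b then 1 else 0)"

definition cartan :: "nat \<Rightarrow> mat set" where
  "cartan l = {H \<in> sl l. \<forall>i j. i \<noteq> j \<longrightarrow> H i j = 0}"

definition nplus :: "nat \<Rightarrow> mat set" where
  "nplus l = {X \<in> sl l. \<forall>i j. j \<le> i \<longrightarrow> X i j = 0}"

text \<open>Tensor algebra T(g) (free associative algebra on the set g):
  finitely supported functions from words of elements of g to complex numbers.\<close>
type_synonym tens = "mat list \<Rightarrow> complex"

definition tspace :: "nat \<Rightarrow> tens set" where
  "tspace l = {f. finite {w. f w \<noteq> 0} \<and> (\<forall>w. f w \<noteq> 0 \<longrightarrow> set w \<subseteq> sl l)}"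

definition tzero :: tens where "tzero = (\<lambda>w. 0)"
definition tone :: tens where "tone = (\<lambda>w. if w = [] then 1 else 0)"
definition tgen :: "mat \<Rightarrow> tens" where "tgen A = (\<lambda>w. if w = [A] then 1 else 0)"
definition tadd :: "tens \<Rightarrow> tens \<Rightarrow> tens" where "tadd f g = (\<lambda>w. f w + g w)"
definition tsc :: "complex \<Rightarrow> tens \<Rightarrow> tens" where "tsc c f = (\<lambda>w. c * f w)"
definition tsub :: "tens \<Rightarrow> tens \<Rightarrow> tens" where "tsub f g = (\<lambda>w. f w - g w)"
definition tmul :: "tens \<Rightarrow> tens \<Rightarrow> tens" where
  "tmul f g = (\<lambda>w. \<Sum>k\<in>{0..length w}. f (take k w) * g (drop k w))"

text \<open>Two-sided ideal I with U(g) = T(g)/I: generated by the linearity relations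
  of the embedding g -> T(g) and by XY - YX - [X,Y].\<close>
inductive_set uideal :: "nat \<Rightarrow> tens set" for l where
  zero: "tzero \<in> uideal l"
| lin_add: "A \<in> sl l \<Longrightarrow> B \<in> sl l \<Longrightarrow> tsub (tgen (madd A B)) (tadd (tgen A) (tgen B)) \<in> uideal l"
| lin_sc: "A \<in> sl l \<Longrightarrow> tsub (tgen (msc c A)) (tsc c (tgen A)) \<in> uideal l"
| comm: "A \<in> sl l \<Longrightarrow> B \<in> sl l \<Longrightarrow>
     tsub (tsub (tmul (tgen A) (tgen B)) (tmul (tgen B) (tgen A))) (tgen (mbr l A B)) \<in> uideal l"
| add: "x \<in> uideal l \<Longrightarrow> y \<in> uideal l \<Longrightarrow> tadd x y \<in> uideal l"
| sc: "x \<in> uideal l \<Longrightarrow> tsc c x \<in> uideal l"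
| lmul: "x \<in> uideal l \<Longrightarrow> a \<in> tspace l \<Longrightarrow> tmul a x \<in> uideal l"
| rmul: "x \<in> uideal l \<Longrightarrow> a \<in> tspace l \<Longrightarrow> tmul x a \<in> uideal l"

text \<open>Preimage in T(g) of the left ideal U(g) n_+.\<close>
inductive_set leftN :: "nat \<Rightarrow> tens set" for l where
  ideal: "x \<in> uideal l \<Longrightarrow> x \<in> leftN l"
| gen: "a \<in> tspace l \<Longrightarrow> X \<in> nplus l \<Longrightarrow> tmul a (tgen X) \<in> leftN l"
| add: "x \<in> leftN l \<Longrightarrow> y \<in> leftN l \<Longrightarrow> tadd x y \<in> leftN l"
| sc: "x \<in> leftN l \<Longrightarrow> tsc c x \<in> leftN l"

text \<open>Root vectors e_{eps_a - eps_b} = (-1)^(b-a-1) E_{ab} for a<b, and h_i.\<close>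
definition eroot :: "nat \<Rightarrow> nat \<Rightarrow> mat" where
  "eroot a b = msc ((-1) ^ (b - a - 1)) (Emat a b)"

definition hh :: "nat \<Rightarrow> tens" where
  "hh i = tgen (madd (Emat i i) (msc (-1) (Emat (Suc i) (Suc i))))"

definition vprime :: "nat \<Rightarrow> tens" where
  "vprime l = tsub (tmul (tgen (eroot 1 (l+1))) (tgen (eroot 2 l)))
                   (tmul (tgen (eroot 2 (l+1))) (tgen (eroot 1 l)))"

text \<open>Preimage in T(g) of the adjoint submodule R generated by v' (ad_X u = Xu - uX).\<close>
inductive_set Rmod :: "nat \<Rightarrow> tens set" for l where
  base: "vprime l \<in> Rmod l"
| ideal: "x \<in> uideal l \<Longrightarrow> x \<in> Rmod l"
| ad: "x \<in> Rmod l \<Longrightarrow> X \<in> sl l \<Longrightarrow> tsub (tmul (tgen X) x) (tmul x (tgen X)) \<in> Rmod l"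
| add: "x \<in> Rmod l \<Longrightarrow> y \<in> Rmod l \<Longrightarrow> tadd x y \<in> Rmod l"
| sc: "x \<in> Rmod l \<Longrightarrow> tsc c x \<in> Rmod l"

definition R0 :: "nat \<Rightarrow> tens set" where
  "R0 l = {r \<in> Rmod l. \<forall>H \<in> cartan l. tsub (tmul (tgen H) r) (tmul r (tgen H)) \<in> uideal l}"

text \<open>p (a polynomial in h_1..h_l, realised as an element of S(h) \<subseteq> U(g)) lies in P_0
  iff p = p_r for some r in R_0, i.e. r - p \<in> U(g) n_+ (p_r is unique).\<close>
definition inP0 :: "nat \<Rightarrow> tens \<Rightarrow> bool" where
  "inP0 l p \<longleftrightarrow> (\<exists>r \<in> R0 l. tsub r p \<in> leftN l)"

end

theory Submission
  imports Defs "HOL-Library.Function_Algebras"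
begin


lemma tadd_eq[simp]: "tadd f g = f + g" by (rule ext) (simp add: tadd_def)
lemma tsub_eq[simp]: "tsub f g = f - g" by (rule ext) (simp add: tsub_def)
lemma tzero_eq[simp]: "tzero = 0" by (rule ext) (simp add: tzero_def)

lemma tmul_Nil: "tmul f g [] = f [] * g []" by (simp add: tmul_def)
lemma tmul_Cons: "tmul f g (x#w) = f [] * g (x#w) + tmul (\<lambda>u. f (x#u)) g w"
  unfolding tmul_def
  by (simp only: length_Cons sum.atLeast0_atMost_Suc_shift) simp

lemma tmul_lin_left: "tmul (\<lambda>u. c * a u + b u) h w = c * tmul a h w + tmul b h w"
  by (simp add: tmul_def sum.distrib sum_distrib_left algebra_simps)

lemma tmul_assoc: "tmul (tmul f g) h = tmul f (tmul g h)"
proof (rule ext)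
  fix w show "tmul (tmul f g) h w = tmul f (tmul g h) w"
  proof (induction w arbitrary: f)
    case Nil then show ?case by (simp add: tmul_Nil)
  next
    case (Cons x w)
    have e: "(\<lambda>u. tmul f g (x#u)) = (\<lambda>u. f [] * g (x#u) + tmul (\<lambda>u. f (x#u)) g u)"
      by (simp add: tmul_Cons)
    have "tmul (tmul f g) h (x#w) = f [] * g [] * h (x#w) + (f [] * tmul (\<lambda>u. g (x#u)) h w + tmul (tmul (\<lambda>u. f (x#u)) g) h w)"
      by (simp add: tmul_Cons tmul_Nil e tmul_lin_left)
    also have "\<dots> = tmul f (tmul g h) (x#w)"
      by (simp add: tmul_Cons tmul_Nil Cons.IH algebra_simps)
    finally show ?case .
  qed
qed

lemma tmul_add_left[simp]: "tmul (f + g) h = tmul f h + tmul g h"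
  by (rule ext) (simp add: tmul_def sum.distrib algebra_simps)
lemma tmul_add_right[simp]: "tmul h (f + g) = tmul h f + tmul h g"
  by (rule ext) (simp add: tmul_def sum.distrib algebra_simps)
lemma tmul_diff_left[simp]: "tmul (f - g) h = tmul f h - tmul g h"
  by (rule ext) (simp add: tmul_def sum_subtractf algebra_simps)
lemma tmul_diff_right[simp]: "tmul h (f - g) = tmul h f - tmul h g"
  by (rule ext) (simp add: tmul_def sum_subtractf algebra_simps)
lemma tmul_zero_left[simp]: "tmul 0 h = 0"
  by (rule ext) (simp add: tmul_def)
lemma tmul_zero_right[simp]: "tmul h 0 = 0"
  by (rule ext) (simp add: tmul_def)
lemma tmul_tsc_left[simp]: "tmul (tsc c f) h = tsc c (tmul f h)"
  by (rule ext) (simp add: tmul_def tsc_def sum_distrib_left algebra_simps)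
lemma tmul_tsc_right[simp]: "tmul h (tsc c f) = tsc c (tmul h f)"
  by (rule ext) (simp add: tmul_def tsc_def sum_distrib_left algebra_simps)
lemma tmul_tone_right[simp]: "tmul h tone = h"
proof (rule ext)
  fix w
  have "tmul h tone w = (\<Sum>k\<in>{0..length w}. if k = length w then h w else 0)"
    unfolding tmul_def tone_def by (rule sum.cong) auto
  then show "tmul h tone w = h w" by simp
qed

lemma tsc_add[simp]: "tsc c (f + g) = tsc c f + tsc c g" by (rule ext) (simp add: tsc_def algebra_simps)
lemma tsc_diff[simp]: "tsc c (f - g) = tsc c f - tsc c g" by (rule ext) (simp add: tsc_def algebra_simps)
lemma tsc_tsc[simp]: "tsc c (tsc d f) = tsc (c*d) f" by (rule ext) (simp add: tsc_def)
lemma tsc_zero[simp]: "tsc c 0 = 0" by (rule ext) (simp add: tsc_def)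
lemma tsc_0[simp]: "tsc 0 f = 0" by (rule ext) (simp add: tsc_def)
lemma tsc_1[simp]: "tsc 1 f = f" by (rule ext) (simp add: tsc_def)

lemma tspace_zero[simp]: "0 \<in> tspace l" by (simp add: tspace_def)
lemma tspace_tgen: "A \<in> sl l \<Longrightarrow> tgen A \<in> tspace l"
proof -
  assume A: "A \<in> sl l"
  have "{w. tgen A w \<noteq> 0} \<subseteq> {[A]}" by (auto simp: tgen_def split: if_splits)
  then have "finite {w. tgen A w \<noteq> 0}" by (rule finite_subset) simp
  then show ?thesis using A by (auto simp: tspace_def tgen_def split: if_splits)
qed
lemma tspace_add: "f \<in> tspace l \<Longrightarrow> g \<in> tspace l \<Longrightarrow> f + g \<in> tspace l"
proof -
  assume f: "f \<in> tspace l" and g: "g \<in> tspace l"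
  have "{w. (f+g) w \<noteq> 0} \<subseteq> {w. f w \<noteq> 0} \<union> {w. g w \<noteq> 0}" by auto
  then have "finite {w. (f+g) w \<noteq> 0}" using f g by (auto simp: tspace_def intro: finite_subset)
  moreover have "\<forall>w. (f+g) w \<noteq> 0 \<longrightarrow> set w \<subseteq> sl l"
  proof (intro allI impI)
    fix w assume "(f+g) w \<noteq> 0"
    then have "f w \<noteq> 0 \<or> g w \<noteq> 0" by auto
    then show "set w \<subseteq> sl l" using f g by (auto simp: tspace_def)
  qed
  ultimately show ?thesis by (simp add: tspace_def)
qed
lemma tspace_tsc: "f \<in> tspace l \<Longrightarrow> tsc c f \<in> tspace l"
proof -
  assume f: "f \<in> tspace l"
  have "{w. tsc c f w \<noteq> 0} \<subseteq> {w. f w \<noteq> 0}" by (auto simp: tsc_def)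
  then show ?thesis using f by (auto simp: tspace_def tsc_def intro: finite_subset)
qed
lemma tspace_diff: "f \<in> tspace l \<Longrightarrow> g \<in> tspace l \<Longrightarrow> f - g \<in> tspace l"
proof -
  assume f: "f \<in> tspace l" and g: "g \<in> tspace l"
  have e: "f - g = f + tsc (-1) g" by (rule ext) (simp add: tsc_def)
  show ?thesis unfolding e using tspace_add[OF f tspace_tsc[OF g]] .
qed
lemma tmul_nz: "tmul f g w \<noteq> 0 \<Longrightarrow> \<exists>k. f (take k w) \<noteq> 0 \<and> g (drop k w) \<noteq> 0"
proof (rule ccontr)
  assume a: "tmul f g w \<noteq> 0" and b: "\<not> (\<exists>k. f (take k w) \<noteq> 0 \<and> g (drop k w) \<noteq> 0)"
  then have "tmul f g w = 0" unfolding tmul_def by (intro sum.neutral) auto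
  with a show False by simp
qed
lemma tspace_tmul: "f \<in> tspace l \<Longrightarrow> g \<in> tspace l \<Longrightarrow> tmul f g \<in> tspace l"
proof -
  assume f: "f \<in> tspace l" and g: "g \<in> tspace l"
  have "{w. tmul f g w \<noteq> 0} \<subseteq> (\<lambda>(u,v). u @ v) ` ({u. f u \<noteq> 0} \<times> {v. g v \<noteq> 0})"
  proof
    fix w assume "w \<in> {w. tmul f g w \<noteq> 0}"
    then have "tmul f g w \<noteq> 0" by simp
    from tmul_nz[OF this] obtain k where "f (take k w) \<noteq> 0" "g (drop k w) \<noteq> 0" by blast
    then show "w \<in> (\<lambda>(u,v). u @ v) ` ({u. f u \<noteq> 0} \<times> {v. g v \<noteq> 0})"
      by (intro image_eqI[where x="(take k w, drop k w)"]) auto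
  qed
  moreover have "finite ((\<lambda>(u,v). u @ v) ` ({u. f u \<noteq> 0} \<times> {v. g v \<noteq> 0}))"
    using f g by (simp add: tspace_def)
  ultimately have fin: "finite {w. tmul f g w \<noteq> 0}" by (rule finite_subset)
  have "set w \<subseteq> sl l" if "tmul f g w \<noteq> 0" for w
  proof -
    from tmul_nz[OF that] obtain k where k: "f (take k w) \<noteq> 0" "g (drop k w) \<noteq> 0" by blast
    have "set (take k w) \<subseteq> sl l" "set (drop k w) \<subseteq> sl l" using k f g by (auto simp: tspace_def)
    then show ?thesis using append_take_drop_id[of k w] by (metis set_append Un_subset_iff)
  qed
  with fin show ?thesis by (simp add: tspace_def)
qed

lemma ui_zero[simp]: "0 \<in> uideal l" using uideal.zero[of l] by simp
lemma ui_add: "x \<in> uideal l \<Longrightarrow> y \<in> uideal l \<Longrightarrow> x + y \<in> uideal l" using uideal.add[of x l y] by simp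
lemma ui_sc: "x \<in> uideal l \<Longrightarrow> tsc c x \<in> uideal l" using uideal.sc by blast
lemma ui_diff: "x \<in> uideal l \<Longrightarrow> y \<in> uideal l \<Longrightarrow> x - y \<in> uideal l"
proof -
  assume "x \<in> uideal l" "y \<in> uideal l"
  moreover have e: "x - y = x + tsc (-1) y" by (rule ext) (simp add: tsc_def)
  ultimately show ?thesis unfolding e by (intro ui_add ui_sc)
qed

definition eqv :: "nat \<Rightarrow> tens \<Rightarrow> tens \<Rightarrow> bool" where "eqv l x y \<longleftrightarrow> x - y \<in> uideal l"

lemma eqv_refl[simp]: "eqv l x x" by (simp add: eqv_def)
lemma eqv_sym: "eqv l x y \<Longrightarrow> eqv l y x"
proof -
  assume "eqv l x y"
  then have "tsc (-1) (x - y) \<in> uideal l" unfolding eqv_def by (rule ui_sc)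
  moreover have e: "y - x = tsc (-1) (x - y)" by (rule ext) (simp add: tsc_def)
  ultimately show ?thesis unfolding eqv_def e by blast
qed
lemma eqv_trans: "eqv l x y \<Longrightarrow> eqv l y z \<Longrightarrow> eqv l x z"
proof -
  assume "eqv l x y" "eqv l y z"
  then have "(x - y) + (y - z) \<in> uideal l" unfolding eqv_def by (rule ui_add)
  moreover have e: "x - z = (x - y) + (y - z)" by simp
  ultimately show ?thesis unfolding eqv_def e by blast
qed
lemma eqv_add: "eqv l x x' \<Longrightarrow> eqv l y y' \<Longrightarrow> eqv l (x + y) (x' + y')"
proof -
  assume "eqv l x x'" "eqv l y y'"
  then have "(x - x') + (y - y') \<in> uideal l" by (simp add: eqv_def ui_add)
  moreover have "(x - x') + (y - y') = (x + y) - (x' + y')" by (simp add: algebra_simps)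
  ultimately show ?thesis by (simp add: eqv_def)
qed
lemma eqv_diff: "eqv l x x' \<Longrightarrow> eqv l y y' \<Longrightarrow> eqv l (x - y) (x' - y')"
proof -
  assume "eqv l x x'" "eqv l y y'"
  then have "(x - x') - (y - y') \<in> uideal l" by (simp add: eqv_def ui_diff)
  moreover have "(x - x') - (y - y') = (x - y) - (x' - y')" by (simp add: algebra_simps)
  ultimately show ?thesis by (simp add: eqv_def)
qed
lemma eqv_tsc: "eqv l x x' \<Longrightarrow> eqv l (tsc c x) (tsc c x')"
  using ui_sc by (simp add: eqv_def flip: tsc_diff)
lemma eqv_mul: "eqv l A A' \<Longrightarrow> eqv l B B' \<Longrightarrow> A \<in> tspace l \<Longrightarrow> B' \<in> tspace l
   \<Longrightarrow> eqv l (tmul A B) (tmul A' B')"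
proof -
  assume a: "eqv l A A'" "eqv l B B'" "A \<in> tspace l" "B' \<in> tspace l"
  have "tmul A (B - B') \<in> uideal l" using a uideal.lmul unfolding eqv_def by blast
  moreover have "tmul (A - A') B' \<in> uideal l" using a uideal.rmul unfolding eqv_def by blast
  ultimately have "tmul A (B - B') + tmul (A - A') B' \<in> uideal l" by (rule ui_add)
  moreover have e: "tmul A B - tmul A' B' = tmul A (B - B') + tmul (A - A') B'" by simp
  ultimately show ?thesis unfolding eqv_def e by blast
qed

lemma eqv_mul_l: "eqv l A A' \<Longrightarrow> B \<in> tspace l \<Longrightarrow> eqv l (tmul A B) (tmul A' B)"
  unfolding eqv_def using uideal.rmul by (metis tmul_diff_left)
lemma eqv_mul_r: "A \<in> tspace l \<Longrightarrow> eqv l B B' \<Longrightarrow> eqv l (tmul A B) (tmul A B')"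
  unfolding eqv_def using uideal.lmul by (metis tmul_diff_right)

definition adt :: "mat \<Rightarrow> tens \<Rightarrow> tens" where
  "adt X x = tmul (tgen X) x - tmul x (tgen X)"

lemma adt_add[simp]: "adt X (x + y) = adt X x + adt X y" by (simp add: adt_def algebra_simps)
lemma adt_diff[simp]: "adt X (x - y) = adt X x - adt X y" by (simp add: adt_def algebra_simps)
lemma adt_tsc[simp]: "adt X (tsc c x) = tsc c (adt X x)" by (simp add: adt_def)
lemma adt_zero[simp]: "adt X 0 = 0" by (simp add: adt_def)
lemma adt_mul_exact: "adt X (tmul a b) = tmul (adt X a) b + tmul a (adt X b)"
  by (simp add: adt_def tmul_assoc algebra_simps)

lemma adt_ui: "X \<in> sl l \<Longrightarrow> x \<in> uideal l \<Longrightarrow> adt X x \<in> uideal l"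
  unfolding adt_def
  by (intro ui_diff uideal.lmul uideal.rmul tspace_tgen)

lemma eqv_adt: "X \<in> sl l \<Longrightarrow> eqv l x y \<Longrightarrow> eqv l (adt X x) (adt X y)"
  unfolding eqv_def using adt_ui[of X l "x - y"] by simp

lemma ad_mul: "X \<in> sl l \<Longrightarrow> eqv l (adt X A) A' \<Longrightarrow> eqv l (adt X B) B' \<Longrightarrow> A \<in> tspace l \<Longrightarrow> B \<in> tspace l
  \<Longrightarrow> eqv l (adt X (tmul A B)) (tmul A' B + tmul A B')"
  unfolding adt_mul_exact
  by (intro eqv_add eqv_mul_l eqv_mul_r)



lemma sum_if_eq: "finite S \<Longrightarrow> (\<Sum>k\<in>S. (if k = b then c else 0)) = (if b \<in> S then c else (0::complex))"
  by (simp add: sum.delta')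

lemma mbr_EE:
  "mbr l (Emat a b) (Emat c d) = (\<lambda>i j. (if b = c \<and> i = a \<and> j = d \<and> b \<in> {1..l+1} then 1 else 0)
       - (if d = a \<and> i = c \<and> j = b \<and> d \<in> {1..l+1} then 1 else 0))"
proof (rule ext, rule ext)
  fix i j
  have "mbr l (Emat a b) (Emat c d) i j = (\<Sum>k=1..l+1. (if k = b then (if i = a \<and> b = c \<and> j = d then 1 else 0) else 0)
      - (if k = d then (if i = c \<and> d = a \<and> j = b then 1 else 0) else 0))"
    unfolding mbr_def Emat_def by (intro sum.cong refl arg_cong2[where f="minus"]) simp_all
  also have "\<dots> = (if b = c \<and> i = a \<and> j = d \<and> b \<in> {1..l+1} then 1 else 0)
       - (if d = a \<and> i = c \<and> j = b \<and> d \<in> {1..l+1} then 1 else 0)"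
    by (simp only: sum_subtractf sum.delta' finite_atLeastAtMost) auto
  finally show "mbr l (Emat a b) (Emat c d) i j = (if b = c \<and> i = a \<and> j = d \<and> b \<in> {1..l+1} then 1 else 0)
       - (if d = a \<and> i = c \<and> j = b \<and> d \<in> {1..l+1} then 1 else 0)" .
qed
definition diagm :: "mat \<Rightarrow> bool" where "diagm H \<longleftrightarrow> (\<forall>i j. i \<noteq> j \<longrightarrow> H i j = 0)"

lemma mbr_HE:
  assumes "diagm H" "a \<in> {1..l+1}" "b \<in> {1..l+1}"
  shows "mbr l H (Emat a b) = msc (H a a - H b b) (Emat a b)"
proof (rule ext, rule ext)
  fix i j
  have "mbr l H (Emat a b) i j = (\<Sum>k=1..l+1. (if k = a then (if j = b then H i a else 0) else 0)
      - (if k = b then (if i = a then H b j else 0) else 0))"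
    unfolding mbr_def Emat_def by (rule sum.cong) auto
  also have "\<dots> = (if j = b then H i a else 0) - (if i = a then H b j else 0)"
    using assms by (simp only: sum_subtractf sum.delta' finite_atLeastAtMost) auto
  also have "\<dots> = msc (H a a - H b b) (Emat a b) i j"
    using assms(1) unfolding diagm_def msc_def Emat_def by auto
  finally show "mbr l H (Emat a b) i j = msc (H a a - H b b) (Emat a b) i j" .
qed

lemma mbr_diag:
  assumes "diagm A" "diagm B"
  shows "mbr l A B = (\<lambda>i j. 0)"
proof (rule ext, rule ext)
  fix i j
  have "mbr l A B i j = (\<Sum>k=1..l+1. (if k = i then (if i = j then A i i * B i i - B i i * A i i else 0) else 0))"
    unfolding mbr_def using assms unfolding diagm_def by (intro sum.cong) auto
  also have "\<dots> = 0" by (simp add: sum.delta')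
  finally show "mbr l A B i j = 0" .
qed

lemma mbr_anti: "mbr l A B = msc (-1) (mbr l B A)"
  by (rule ext, rule ext) (simp add: mbr_def msc_def sum_subtractf[symmetric] sum_negf[symmetric] algebra_simps)

definition Dm :: "nat \<Rightarrow> nat \<Rightarrow> mat" where
  "Dm p q = madd (Emat p p) (msc (-1) (Emat q q))"

lemma diagm_Dm: "diagm (Dm p q)" by (simp add: diagm_def Dm_def madd_def msc_def Emat_def)

lemma sl_Emat: "a \<in> {1..l+1} \<Longrightarrow> b \<in> {1..l+1} \<Longrightarrow> a \<noteq> b \<Longrightarrow> Emat a b \<in> sl l"
proof -
  assume "a \<in> {1..l+1}" "b \<in> {1..l+1}" "a \<noteq> b"
  moreover have "(\<Sum>i=1..l+1. Emat a b i i) = 0" using \<open>a \<noteq> b\<close> by (intro sum.neutral) (auto simp: Emat_def)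
  ultimately show ?thesis by (auto simp: sl_def Emat_def)
qed

lemma sl_Dm: "p \<in> {1..l+1} \<Longrightarrow> q \<in> {1..l+1} \<Longrightarrow> Dm p q \<in> sl l"
proof -
  assume p: "p \<in> {1..l+1}" and q: "q \<in> {1..l+1}"
  have "(\<Sum>i=1..l+1. Dm p q i i) = (\<Sum>i=1..l+1. (if i = p then 1 else 0) - (if i = q then 1 else (0::complex)))"
    by (rule sum.cong) (auto simp: Dm_def madd_def msc_def Emat_def)
  also have "\<dots> = 0" using p q by (simp only: sum_subtractf sum.delta' finite_atLeastAtMost) simp
  finally show ?thesis using p q by (auto simp: sl_def Dm_def madd_def msc_def Emat_def)
qed

lemma sl_zero: "(\<lambda>i j. 0) \<in> sl l" by (simp add: sl_def)

definition E :: "nat \<Rightarrow> nat \<Rightarrow> tens" where "E a b = tgen (Emat a b)"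
definition DD :: "nat \<Rightarrow> nat \<Rightarrow> tens" where "DD p q = tgen (Dm p q)"

lemma tgen_add: "A \<in> sl l \<Longrightarrow> B \<in> sl l \<Longrightarrow> eqv l (tgen (madd A B)) (tgen A + tgen B)"
  using uideal.lin_add[of A l B] by (simp add: eqv_def)
lemma tgen_sc: "A \<in> sl l \<Longrightarrow> eqv l (tgen (msc c A)) (tsc c (tgen A))"
  using uideal.lin_sc[of A l c] by (simp add: eqv_def)
lemma tgen_zero: "eqv l (tgen (\<lambda>i j. 0)) 0"
proof -
  have "msc 0 (\<lambda>i j. 0) = (\<lambda>i j. 0)" by (simp add: msc_def)
  then show ?thesis using tgen_sc[OF sl_zero, of l 0] by simp
qed
lemma tgen_comm: "A \<in> sl l \<Longrightarrow> B \<in> sl l \<Longrightarrow> eqv l (adt A (tgen B)) (tgen (mbr l A B))"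
  using uideal.comm[of A l B] by (simp add: eqv_def adt_def)

definition rg :: "nat \<Rightarrow> nat \<Rightarrow> bool" where "rg l a \<longleftrightarrow> 1 \<le> a \<and> a \<le> l + 1"

lemma rg_in: "rg l a \<Longrightarrow> a \<in> {1..l+1}" by (simp add: rg_def)

lemma tsp_E: "rg l a \<Longrightarrow> rg l b \<Longrightarrow> a \<noteq> b \<Longrightarrow> E a b \<in> tspace l"
  unfolding E_def by (intro tspace_tgen sl_Emat rg_in)
lemma tsp_DD: "rg l a \<Longrightarrow> rg l b \<Longrightarrow> DD a b \<in> tspace l"
  unfolding DD_def by (intro tspace_tgen sl_Dm rg_in)

definition brv :: "nat \<Rightarrow> nat \<Rightarrow> nat \<Rightarrow> nat \<Rightarrow> tens" where
  "brv a b c d = (if b = c \<and> d = a then DD a b else if b = c then E a d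
                  else if d = a then tsc (-1) (E c b) else 0)"

lemma br_EE:
  assumes r: "rg l a" "rg l b" "rg l c" "rg l d" and ne: "a \<noteq> b" "c \<noteq> d"
  shows "eqv l (adt (Emat a b) (E c d)) (brv a b c d)"
proof -
  have c0: "eqv l (adt (Emat a b) (E c d)) (tgen (mbr l (Emat a b) (Emat c d)))"
    unfolding E_def using r ne by (intro tgen_comm sl_Emat rg_in)
  have m: "mbr l (Emat a b) (Emat c d) = (\<lambda>i j. (if b = c \<and> i = a \<and> j = d then 1 else 0)
       - (if d = a \<and> i = c \<and> j = b then 1 else 0))"
    using r unfolding mbr_EE by (simp add: rg_def)
  show ?thesis
  proof (cases "b = c")
    case bc: True
    show ?thesis
    proof (cases "d = a")
      case True
      have "mbr l (Emat a b) (Emat c d) = Dm a b"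
        unfolding m using bc True by (auto simp: Dm_def madd_def msc_def Emat_def)
      then show ?thesis using c0 bc True by (simp add: brv_def DD_def)
    next
      case False
      have "mbr l (Emat a b) (Emat c d) = Emat a d"
        unfolding m using bc False by (auto simp: Emat_def)
      then show ?thesis using c0 bc False by (simp add: brv_def E_def)
    qed
  next
    case bc: False
    show ?thesis
    proof (cases "d = a")
      case True
      have "mbr l (Emat a b) (Emat c d) = msc (-1) (Emat c b)"
        unfolding m using bc True by (auto simp: Emat_def msc_def)
      moreover have "eqv l (tgen (msc (-1) (Emat c b))) (tsc (-1) (E c b))"
        unfolding E_def using r ne bc True by (intro tgen_sc sl_Emat rg_in) auto
      ultimately show ?thesis using c0 bc True by (simp add: brv_def eqv_trans)
    next
      case False
      have "mbr l (Emat a b) (Emat c d) = (\<lambda>i j. 0)"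
        unfolding m using bc False by auto
      then show ?thesis using c0 bc False tgen_zero by (simp add: brv_def) (metis eqv_trans)
    qed
  qed
qed



declare eqv_trans[trans]

lemma cartan_sl: "H \<in> cartan l \<Longrightarrow> H \<in> sl l" by (simp add: cartan_def)
lemma cartan_diag: "H \<in> cartan l \<Longrightarrow> diagm H" by (simp add: cartan_def diagm_def)

lemma br_HE: assumes "H \<in> cartan l" "rg l a" "rg l b" "a \<noteq> b"
  shows "eqv l (adt H (E a b)) (tsc (H a a - H b b) (E a b))"
proof -
  have "eqv l (adt H (E a b)) (tgen (mbr l H (Emat a b)))"
    unfolding E_def using assms by (intro tgen_comm sl_Emat rg_in cartan_sl)
  also have "mbr l H (Emat a b) = msc (H a a - H b b) (Emat a b)"
    using assms by (intro mbr_HE cartan_diag rg_in)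
  also have "eqv l (tgen (msc (H a a - H b b) (Emat a b))) (tsc (H a a - H b b) (E a b))"
    unfolding E_def using assms by (intro tgen_sc sl_Emat rg_in)
  finally show ?thesis .
qed

lemma br_HD: assumes "H \<in> cartan l" "rg l p" "rg l q"
  shows "eqv l (adt H (DD p q)) 0"
proof -
  have "eqv l (adt H (DD p q)) (tgen (mbr l H (Dm p q)))"
    unfolding DD_def using assms by (intro tgen_comm sl_Dm rg_in cartan_sl)
  also have "mbr l H (Dm p q) = (\<lambda>i j. 0)"
    using assms by (intro mbr_diag cartan_diag diagm_Dm)
  also have "eqv l (tgen (\<lambda>i j. 0)) 0" by (rule tgen_zero)
  finally show ?thesis .
qed

lemma br_ED: assumes "rg l a" "rg l b" "a \<noteq> b" "rg l p" "rg l q"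
  shows "eqv l (adt (Emat a b) (DD p q)) (tsc (-(Dm p q a a - Dm p q b b)) (E a b))"
proof -
  have "eqv l (adt (Emat a b) (DD p q)) (tgen (mbr l (Emat a b) (Dm p q)))"
    unfolding DD_def using assms by (intro tgen_comm sl_Dm sl_Emat rg_in)
  also have "mbr l (Emat a b) (Dm p q) = msc (-(Dm p q a a - Dm p q b b)) (Emat a b)"
    apply (subst mbr_anti)
    apply (subst mbr_HE)
    using assms by (auto simp: diagm_Dm rg_def msc_def algebra_simps)
  also have "eqv l (tgen (msc (-(Dm p q a a - Dm p q b b)) (Emat a b))) (tsc (-(Dm p q a a - Dm p q b b)) (E a b))"
    unfolding E_def using assms by (intro tgen_sc sl_Emat rg_in)
  finally show ?thesis .
qed

lemma DD_chain: assumes "rg l p" "rg l q" "rg l s"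
  shows "eqv l (DD p q + DD q s) (DD p s)"
proof -
  have "madd (Dm p q) (Dm q s) = Dm p s"
    by (rule ext, rule ext) (simp add: Dm_def madd_def msc_def Emat_def)
  then show ?thesis using tgen_add[of "Dm p q" l "Dm q s"] assms
    unfolding DD_def by (metis eqv_sym rg_in sl_Dm)
qed

lemma DD_swap: assumes "rg l p" "rg l q"
  shows "eqv l (DD q p) (tsc (-1) (DD p q))"
proof -
  have "Dm q p = msc (-1) (Dm p q)"
    by (rule ext, rule ext) (simp add: Dm_def madd_def msc_def Emat_def)
  then show ?thesis using tgen_sc[of "Dm p q" l "-1"] assms
    unfolding DD_def by (metis rg_in sl_Dm)
qed

lemma ad_EE_prod:
  assumes "rg l x" "rg l y" "rg l a" "rg l b" "rg l c" "rg l d" "x \<noteq> y" "a \<noteq> b" "c \<noteq> d"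
  shows "eqv l (adt (Emat x y) (tmul (E a b) (E c d))) (tmul (brv x y a b) (E c d) + tmul (E a b) (brv x y c d))"
  using assms by (intro ad_mul br_EE tsp_E sl_Emat rg_in)

definition MM :: "nat \<Rightarrow> nat \<Rightarrow> nat \<Rightarrow> nat \<Rightarrow> tens" where
  "MM a b c d = tmul (E a c) (E b d) - tmul (E b c) (E a d)"

lemma Rmod_eqv: "x \<in> Rmod l \<Longrightarrow> eqv l y x \<Longrightarrow> y \<in> Rmod l"
proof -
  assume a: "x \<in> Rmod l" "eqv l y x"
  have u: "y - x \<in> uideal l" using a(2) by (simp add: eqv_def)
  from Rmod.add[OF a(1) Rmod.ideal[OF u]] have "x + (y - x) \<in> Rmod l" by (simp only: tadd_eq)
  then show ?thesis by simp
qed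
lemma Rmod_sc: "x \<in> Rmod l \<Longrightarrow> tsc c x \<in> Rmod l" by (rule Rmod.sc)
lemma Rmod_ad: "x \<in> Rmod l \<Longrightarrow> X \<in> sl l \<Longrightarrow> adt X x \<in> Rmod l"
  using Rmod.ad[of x l X] by (simp add: adt_def)

definition Pm :: "nat \<Rightarrow> nat \<Rightarrow> nat \<Rightarrow> nat \<Rightarrow> nat \<Rightarrow> bool" where
  "Pm l a b c d \<longleftrightarrow> rg l a \<and> rg l b \<and> rg l c \<and> rg l d \<and> distinct [a,b,c,d] \<and> MM a b c d \<in> Rmod l"

lemma rep1: assumes "Pm l a b c d" "rg l x" "x \<notin> {a,b,c,d}"
  shows "Pm l x b c d"
proof -
  have r: "rg l a" "rg l b" "rg l c" "rg l d" "distinct [a,b,c,d]" "MM a b c d \<in> Rmod l"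
    using assms(1) by (auto simp: Pm_def)
  have "eqv l (adt (Emat x a) (MM a b c d))
     ((tmul (brv x a a c) (E b d) + tmul (E a c) (brv x a b d)) - (tmul (brv x a b c) (E a d) + tmul (E b c) (brv x a a d)))"
    unfolding MM_def adt_diff using r assms by (intro eqv_diff ad_EE_prod) auto
  also have "\<dots> = MM x b c d" using r assms by (auto simp: brv_def MM_def)
  finally have "eqv l (adt (Emat x a) (MM a b c d)) (MM x b c d)" .
  moreover have "adt (Emat x a) (MM a b c d) \<in> Rmod l"
    using r assms by (intro Rmod_ad sl_Emat rg_in) auto
  ultimately have "MM x b c d \<in> Rmod l" by (meson Rmod_eqv eqv_sym)
  then show ?thesis using r assms by (auto simp: Pm_def)
qed

lemma sw12: assumes "Pm l a b c d" shows "Pm l b a c d"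
proof -
  have "MM b a c d = tsc (-1) (MM a b c d)" by (rule ext) (simp add: MM_def tsc_def)
  then show ?thesis using assms by (auto simp: Pm_def intro: Rmod_sc)
qed

lemma comm0: "eqv l (adt (Emat a b) (E c d)) 0 \<Longrightarrow> eqv l (tmul (E a b) (E c d)) (tmul (E c d) (E a b))"
proof -
  assume h: "eqv l (adt (Emat a b) (E c d)) 0"
  have e: "tmul (E a b) (E c d) = tmul (E c d) (E a b) + adt (Emat a b) (E c d)"
    by (simp add: adt_def E_def)
  have "eqv l (tmul (E c d) (E a b) + adt (Emat a b) (E c d)) (tmul (E c d) (E a b) + 0)" by (intro eqv_add h eqv_refl)
  then show ?thesis unfolding e by simp
qed

lemma sw34: assumes "Pm l a b c d" shows "Pm l a b d c"
proof -
  have r: "rg l a" "rg l b" "rg l c" "rg l d" "distinct [a,b,c,d]" "MM a b c d \<in> Rmod l"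
    using assms(1) by (auto simp: Pm_def)
  have c1: "eqv l (tmul (E a d) (E b c)) (tmul (E b c) (E a d))"
    apply (rule comm0) using br_EE[of l a d b c] r by (simp add: brv_def)
  have c2: "eqv l (tmul (E b d) (E a c)) (tmul (E a c) (E b d))"
    apply (rule comm0) using br_EE[of l b d a c] r by (simp add: brv_def)
  have "eqv l (MM a b d c) (tmul (E b c) (E a d) - tmul (E a c) (E b d))"
    unfolding MM_def by (intro eqv_diff c1 c2)
  also have "\<dots> = tsc (-1) (MM a b c d)" by (rule ext) (simp add: MM_def tsc_def)
  finally have "MM a b d c \<in> Rmod l" using r Rmod_eqv Rmod_sc by blast
  then show ?thesis using r by (auto simp: Pm_def)
qed

lemma sw23: assumes "Pm l a b c d" shows "Pm l a c b d"
proof -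
  have r: "rg l a" "rg l b" "rg l c" "rg l d" "distinct [a,b,c,d]" "MM a b c d \<in> Rmod l"
    using assms(1) by (auto simp: Pm_def)
  define S1 where "S1 = tmul (E a c) (E c d) - tmul (E a b) (E b d) - tmul (DD c b) (E a d)"
  have "eqv l (adt (Emat c b) (MM a b c d))
     ((tmul (brv c b a c) (E b d) + tmul (E a c) (brv c b b d)) - (tmul (brv c b b c) (E a d) + tmul (E b c) (brv c b a d)))"
    unfolding MM_def adt_diff using r by (intro eqv_diff ad_EE_prod) auto
  also have "\<dots> = S1" using r
    apply (simp add: brv_def S1_def)
    apply (rule ext) by (simp add: tsc_def algebra_simps)
  finally have s1: "eqv l (adt (Emat c b) (MM a b c d)) S1" .
  have "eqv l (adt (Emat c b) S1)
     ((tmul (brv c b a c) (E c d) + tmul (E a c) (brv c b c d)) - (tmul (brv c b a b) (E b d) + tmul (E a b) (brv c b b d))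
      - (tmul (tsc (-(Dm c b c c - Dm c b b b)) (E c b)) (E a d) + tmul (DD c b) (brv c b a d)))"
    unfolding S1_def adt_diff using r
    by (intro eqv_diff ad_EE_prod ad_mul br_ED br_EE sl_Emat rg_in tsp_DD tsp_E) auto
  also have "\<dots> = tsc (-2) (MM a c b d)" using r
    apply (simp add: brv_def MM_def Dm_def madd_def msc_def Emat_def)
    apply (rule ext) by (simp add: tsc_def algebra_simps)
  finally have s2: "eqv l (adt (Emat c b) S1) (tsc (-2) (MM a c b d))" .
  have sl: "Emat c b \<in> sl l" using r by (intro sl_Emat rg_in) auto
  have "adt (Emat c b) (adt (Emat c b) (MM a b c d)) \<in> Rmod l" using r sl by (intro Rmod_ad) auto
  moreover have "eqv l (adt (Emat c b) (adt (Emat c b) (MM a b c d))) (tsc (-2) (MM a c b d))"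
    using eqv_adt[OF sl s1] s2 eqv_trans by blast
  ultimately have "tsc (-2) (MM a c b d) \<in> Rmod l" by (meson Rmod_eqv eqv_sym)
  then have "tsc (-1/2) (tsc (-2) (MM a c b d)) \<in> Rmod l" by (rule Rmod_sc)
  then have "MM a c b d \<in> Rmod l" by simp
  then show ?thesis using r by (auto simp: Pm_def)
qed



lemma Pm_D: "Pm l a b c d \<Longrightarrow> rg l a \<and> rg l b \<and> rg l c \<and> rg l d \<and> distinct [a,b,c,d]"
  by (simp add: Pm_def)

lemma rep2: "Pm l a b c d \<Longrightarrow> rg l x \<Longrightarrow> x \<notin> {a,b,c,d} \<Longrightarrow> Pm l a x c d"
proof -
  assume "Pm l a b c d" "rg l x" "x \<notin> {a,b,c,d}"
  then have "Pm l b a c d" "x \<notin> {b,a,c,d}" by (auto intro: sw12)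
  then have "Pm l x a c d" using rep1 \<open>rg l x\<close> by blast
  then show ?thesis by (rule sw12)
qed
lemma rep3: "Pm l a b c d \<Longrightarrow> rg l x \<Longrightarrow> x \<notin> {a,b,c,d} \<Longrightarrow> Pm l a b x d"
proof -
  assume "Pm l a b c d" "rg l x" "x \<notin> {a,b,c,d}"
  then have "Pm l a c b d" "x \<notin> {a,c,b,d}" by (auto intro: sw23)
  then have "Pm l a x b d" using rep2 \<open>rg l x\<close> by blast
  then show ?thesis by (rule sw23)
qed
lemma rep4: "Pm l a b c d \<Longrightarrow> rg l x \<Longrightarrow> x \<notin> {a,b,c,d} \<Longrightarrow> Pm l a b c x"
proof -
  assume "Pm l a b c d" "rg l x" "x \<notin> {a,b,c,d}"
  then have "Pm l a b d c" "x \<notin> {a,b,d,c}" by (auto intro: sw34)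
  then have "Pm l a b x c" using rep3 \<open>rg l x\<close> by blast
  then show ?thesis by (rule sw34)
qed

lemma step1: "Pm l a b c d \<Longrightarrow> rg l w \<Longrightarrow> \<exists>b' c' d'. Pm l w b' c' d'"
proof -
  assume P: "Pm l a b c d" and w: "rg l w"
  consider "w = a" | "w = b" | "w = c" | "w = d" | "w \<notin> {a,b,c,d}" by auto
  then show ?thesis
  proof cases
    case 1 then show ?thesis using P by blast
  next
    case 2 then show ?thesis using sw12[OF P] by blast
  next
    case 3 then show ?thesis using sw12[OF sw23[OF P]] by blast
  next
    case 4 then show ?thesis using sw12[OF sw23[OF sw34[OF P]]] by blast
  next
    case 5 then show ?thesis using rep1[OF P w] by blast
  qed
qed

lemma step2: "Pm l w b c d \<Longrightarrow> rg l x \<Longrightarrow> x \<noteq> w \<Longrightarrow> \<exists>c' d'. Pm l w x c' d'"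
proof -
  assume P: "Pm l w b c d" and x: "rg l x" "x \<noteq> w"
  consider "x = b" | "x = c" | "x = d" | "x \<notin> {w,b,c,d}" using x by auto
  then show ?thesis
  proof cases
    case 1 then show ?thesis using P by blast
  next
    case 2 then show ?thesis using sw23[OF P] by blast
  next
    case 3 then show ?thesis using sw23[OF sw34[OF P]] by blast
  next
    case 4 then show ?thesis using rep2[OF P x(1)] by blast
  qed
qed

lemma step3: "Pm l w x c d \<Longrightarrow> rg l y \<Longrightarrow> y \<notin> {w,x} \<Longrightarrow> \<exists>d'. Pm l w x y d'"
proof -
  assume P: "Pm l w x c d" and y: "rg l y" "y \<notin> {w,x}"
  consider "y = c" | "y = d" | "y \<notin> {w,x,c,d}" using y by auto
  then show ?thesis
  proof cases
    case 1 then show ?thesis using P by blast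
  next
    case 2 then show ?thesis using sw34[OF P] by blast
  next
    case 3 then show ?thesis using rep3[OF P y(1)] by blast
  qed
qed

lemma step4: "Pm l w x y d \<Longrightarrow> rg l z \<Longrightarrow> z \<notin> {w,x,y} \<Longrightarrow> Pm l w x y z"
proof -
  assume P: "Pm l w x y d" and z: "rg l z" "z \<notin> {w,x,y}"
  show ?thesis
  proof (cases "z = d")
    case True then show ?thesis using P by simp
  next
    case False then show ?thesis using rep4[OF P z(1)] z by blast
  qed
qed

lemma reach: "Pm l a b c d \<Longrightarrow> rg l w \<Longrightarrow> rg l x \<Longrightarrow> rg l y \<Longrightarrow> rg l z \<Longrightarrow> distinct [w,x,y,z]
   \<Longrightarrow> Pm l w x y z"
proof -
  assume P: "Pm l a b c d" and r: "rg l w" "rg l x" "rg l y" "rg l z" and d: "distinct [w,x,y,z]"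
  obtain b1 c1 d1 where P1: "Pm l w b1 c1 d1" using step1[OF P r(1)] by blast
  obtain c2 d2 where P2: "Pm l w x c2 d2" using step2[OF P1 r(2)] d by auto
  obtain d3 where P3: "Pm l w x y d3" using step3[OF P2 r(3)] d by auto
  show ?thesis using step4[OF P3 r(4)] d by auto
qed

lemma sl_msc: "A \<in> sl l \<Longrightarrow> msc c A \<in> sl l"
proof -
  assume A: "A \<in> sl l"
  have "(\<Sum>i=1..l+1. msc c A i i) = c * (\<Sum>i=1..l+1. A i i)" unfolding msc_def by (rule sum_distrib_left[symmetric])
  also have "\<dots> = 0" using A by (simp add: sl_def)
  finally show ?thesis using A unfolding sl_def by (auto simp: msc_def)
qed

lemma tgen_eroot: "rg l a \<Longrightarrow> rg l b \<Longrightarrow> a \<noteq> b \<Longrightarrow> eqv l (tgen (eroot a b)) (tsc ((-1)^(b-a-1)) (E a b))"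
  unfolding eroot_def E_def by (intro tgen_sc sl_Emat rg_in)

lemma tsp_eroot: "rg l a \<Longrightarrow> rg l b \<Longrightarrow> a \<noteq> b \<Longrightarrow> tgen (eroot a b) \<in> tspace l"
  unfolding eroot_def by (intro tspace_tgen sl_msc sl_Emat rg_in)

lemma start: assumes "l \<ge> 3" shows "Pm l 1 2 (l+1) l"
proof -
  obtain k where k: "l = k + 3" using assms by (metis add.commute le_iff_add)
  have r: "rg l 1" "rg l 2" "rg l (l+1)" "rg l l" using assms by (auto simp: rg_def)
  have e1: "eqv l (tgen (eroot 1 (l+1))) (tsc ((-1)^(k+2)) (E 1 (l+1)))"
    using tgen_eroot[of l 1 "l+1"] r k by simp
  have e2: "eqv l (tgen (eroot 2 l)) (tsc ((-1)^k) (E 2 l))"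
    using tgen_eroot[of l 2 l] r k by simp
  have e3: "eqv l (tgen (eroot 2 (l+1))) (tsc ((-1)^(k+1)) (E 2 (l+1)))"
    using tgen_eroot[of l 2 "l+1"] r k by simp
  have e4: "eqv l (tgen (eroot 1 l)) (tsc ((-1)^(k+1)) (E 1 l))"
    using tgen_eroot[of l 1 l] r k by (simp add: numeral_eq_Suc)
  have t1: "tgen (eroot 1 (l+1)) \<in> tspace l" "tgen (eroot 2 (l+1)) \<in> tspace l"
    using r k by (auto intro!: tsp_eroot)
  have t2: "tsc ((-1)^k) (E 2 l) \<in> tspace l" "tsc ((-1)^(k+1)) (E 1 l) \<in> tspace l"
    using r k by (auto intro!: tspace_tsc tsp_E)
  have "eqv l (vprime l) (tmul (tsc ((-1)^(k+2)) (E 1 (l+1))) (tsc ((-1)^k) (E 2 l))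
        - tmul (tsc ((-1)^(k+1)) (E 2 (l+1))) (tsc ((-1)^(k+1)) (E 1 l)))"
    unfolding vprime_def tsub_eq
    by (rule eqv_diff; rule eqv_mul) (fact e1 e2 e3 e4 t1 t2)+
  also have "\<dots> = tsc ((-1::complex)^(k+2) * (-1)^k) (tmul (E 1 (l+1)) (E 2 l))
        - tsc ((-1::complex)^(k+1) * (-1)^(k+1)) (tmul (E 2 (l+1)) (E 1 l))" by simp
  also have "(-1::complex)^(k+2) * (-1)^k = 1"
  proof -
    have "(-1::complex)^(k+2) * (-1)^k = (-1)^(2*(k+1))" by (simp add: power_add[symmetric] mult_2 algebra_simps)
    also have "\<dots> = 1" by (simp add: power_mult)
    finally show ?thesis .
  qed
  also have "(-1::complex)^(k+1) * (-1)^(k+1) = 1"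
    by (simp add: power_add[symmetric] power_mult[symmetric] mult_2[symmetric])
  finally have "eqv l (vprime l) (MM 1 2 (l+1) l)" by (simp only: MM_def tsc_1)
  then have "MM 1 2 (l+1) l \<in> Rmod l" using Rmod.base Rmod_eqv eqv_sym by blast
  then show ?thesis using r assms by (simp add: Pm_def)
qed



definition Rfin :: "nat \<Rightarrow> nat \<Rightarrow> nat \<Rightarrow> nat \<Rightarrow> tens" where
  "Rfin a b c d = tmul (DD b a) (DD d c) + tmul (E d a) (E a d) - tmul (E c a) (E a c)
     - tmul (E d b) (E b d) + tmul (E c b) (E b c)"

lemma Rfin_Rmod: assumes "Pm l a c b d" shows "Rfin a b c d \<in> Rmod l"
proof -
  have r: "rg l a" "rg l b" "rg l c" "rg l d" "distinct [a,c,b,d]" "MM a c b d \<in> Rmod l"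
    using assms by (auto simp: Pm_def)
  define S1 where "S1 = tmul (DD b a) (E c d) + tmul (E c a) (E a d) - tmul (E c b) (E b d)"
  have "eqv l (adt (Emat b a) (MM a c b d))
     ((tmul (brv b a a b) (E c d) + tmul (E a b) (brv b a c d)) - (tmul (brv b a c b) (E a d) + tmul (E c b) (brv b a a d)))"
    unfolding MM_def adt_diff using r by (intro eqv_diff ad_EE_prod) auto
  also have "\<dots> = S1" using r
    apply (simp add: brv_def S1_def)
    apply (rule ext) by (simp add: tsc_def algebra_simps)
  finally have s1: "eqv l (adt (Emat b a) (MM a c b d)) S1" .
  have "eqv l (adt (Emat d c) S1)
     ((tmul (tsc (-(Dm b a d d - Dm b a c c)) (E d c)) (E c d) + tmul (DD b a) (brv d c c d))
      + (tmul (brv d c c a) (E a d) + tmul (E c a) (brv d c a d))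
      - (tmul (brv d c c b) (E b d) + tmul (E c b) (brv d c b d)))"
    unfolding S1_def adt_diff adt_add using r
    by (intro eqv_add eqv_diff ad_EE_prod ad_mul br_ED br_EE sl_Emat rg_in tsp_DD tsp_E) auto
  also have "\<dots> = Rfin a b c d" using r
    apply (simp add: brv_def Rfin_def Dm_def madd_def msc_def Emat_def)
    apply (rule ext) by (simp add: tsc_def algebra_simps)
  finally have s2: "eqv l (adt (Emat d c) S1) (Rfin a b c d)" .
  have "adt (Emat b a) (MM a c b d) \<in> Rmod l" using r by (intro Rmod_ad sl_Emat rg_in) auto
  then have "S1 \<in> Rmod l" using s1 by (meson Rmod_eqv eqv_sym)
  then have "adt (Emat d c) S1 \<in> Rmod l" using r by (intro Rmod_ad sl_Emat rg_in) auto
  then show ?thesis using s2 by (meson Rmod_eqv eqv_sym)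
qed

lemma wtEE: assumes "H \<in> cartan l" "rg l x" "rg l y" "x \<noteq> y"
  shows "eqv l (adt H (tmul (E y x) (E x y))) 0"
proof -
  have "eqv l (adt H (tmul (E y x) (E x y)))
      (tmul (tsc (H y y - H x x) (E y x)) (E x y) + tmul (E y x) (tsc (H x x - H y y) (E x y)))"
    using assms by (intro ad_mul br_HE cartan_sl tsp_E) auto
  also have "\<dots> = 0" by simp (rule ext, simp add: tsc_def algebra_simps)
  finally show ?thesis .
qed

lemma wtDD: assumes "H \<in> cartan l" "rg l p" "rg l q" "rg l s" "rg l t"
  shows "eqv l (adt H (tmul (DD p q) (DD s t))) 0"
proof -
  have "eqv l (adt H (tmul (DD p q) (DD s t))) (tmul 0 (DD s t) + tmul (DD p q) 0)"
    using assms by (intro ad_mul br_HD cartan_sl tsp_DD) auto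
  then show ?thesis by simp
qed

lemma Rfin_R0: assumes "Pm l a c b d" shows "Rfin a b c d \<in> R0 l"
proof -
  have r: "rg l a" "rg l b" "rg l c" "rg l d" "distinct [a,c,b,d]"
    using assms by (auto simp: Pm_def)
  have "tsub (tmul (tgen H) (Rfin a b c d)) (tmul (Rfin a b c d) (tgen H)) \<in> uideal l" if H: "H \<in> cartan l" for H
  proof -
    have "eqv l (adt H (Rfin a b c d)) (0 + 0 - 0 - 0 + 0)"
      unfolding Rfin_def adt_add adt_diff using r H
      by (intro eqv_add eqv_diff wtEE wtDD) auto
    then have "adt H (Rfin a b c d) \<in> uideal l" by (simp add: eqv_def)
    then show ?thesis by (simp only: tsub_eq adt_def)
  qed
  then show ?thesis using Rfin_Rmod[OF assms] unfolding R0_def by blast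
qed

lemma lN_add: "x \<in> leftN l \<Longrightarrow> y \<in> leftN l \<Longrightarrow> x + y \<in> leftN l"
  using leftN.add[of x l y] by simp
lemma lN_sc: "x \<in> leftN l \<Longrightarrow> tsc c x \<in> leftN l" by (rule leftN.sc)
lemma lN_diff: "x \<in> leftN l \<Longrightarrow> y \<in> leftN l \<Longrightarrow> x - y \<in> leftN l"
proof -
  assume "x \<in> leftN l" "y \<in> leftN l"
  moreover have e: "x - y = x + tsc (-1) y" by (rule ext) (simp add: tsc_def)
  ultimately show ?thesis unfolding e by (intro lN_add lN_sc)
qed
lemma lN_eqv: "x \<in> leftN l \<Longrightarrow> eqv l y x \<Longrightarrow> y \<in> leftN l"
proof -
  assume a: "x \<in> leftN l" "eqv l y x"
  have u: "y - x \<in> uideal l" using a(2) by (simp add: eqv_def)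
  from lN_add[OF a(1) leftN.ideal[OF u]] have "x + (y - x) \<in> leftN l" .
  then show ?thesis by simp
qed
lemma lN_gen: "rg l x \<Longrightarrow> rg l y \<Longrightarrow> x < y \<Longrightarrow> tmul (E y x) (E x y) \<in> leftN l"
proof -
  assume a: "rg l x" "rg l y" "x < y"
  have s: "Emat x y \<in> sl l" using a by (intro sl_Emat rg_in) auto
  have "Emat x y \<in> nplus l" using s a by (auto simp: nplus_def Emat_def)
  moreover have "tgen (Emat y x) \<in> tspace l" using a by (intro tspace_tgen sl_Emat rg_in) auto
  ultimately show ?thesis unfolding E_def by (rule leftN.gen[rotated])
qed

lemma hh_DD: "hh i = DD i (i+1)" by (simp add: hh_def DD_def Dm_def)

lemma commD: assumes "rg l a" "rg l b" "a \<noteq> b"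
  shows "eqv l (tmul (E a b) (E b a)) (tmul (E b a) (E a b) + DD a b)"
proof -
  have e: "tmul (E a b) (E b a) = tmul (E b a) (E a b) + adt (Emat a b) (E b a)"
    by (simp add: adt_def E_def)
  have "eqv l (adt (Emat a b) (E b a)) (DD a b)" using br_EE[of l a b b a] assms by (simp add: brv_def)
  then show ?thesis unfolding e by (intro eqv_add eqv_refl)
qed

lemma case1: assumes "l \<ge> 3" "1 \<le> i" "i + 2 \<le> j" "j \<le> l"
  shows "inP0 l (tmul (hh i) (hh j))"
proof -
  have r: "rg l i" "rg l (i+1)" "rg l j" "rg l (j+1)" using assms by (auto simp: rg_def)
  have P: "Pm l i j (i+1) (j+1)" using reach[OF start[OF assms(1)] r(1) r(3) r(2) r(4)] assms by auto
  let ?R = "Rfin i (i+1) j (j+1)"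
  have R0: "?R \<in> R0 l" using Rfin_R0[OF P] .
  let ?L = "tmul (E (j+1) i) (E i (j+1)) - tmul (E j i) (E i j) - tmul (E (j+1) (i+1)) (E (i+1) (j+1))
     + tmul (E j (i+1)) (E (i+1) j)"
  have L: "?L \<in> leftN l" using r assms by (intro lN_add lN_diff lN_gen) auto
  have "eqv l (tmul (DD (i+1) i) (DD (j+1) j)) (tmul (tsc (-1) (DD i (i+1))) (tsc (-1) (DD j (j+1))))"
    using r by (intro eqv_mul DD_swap tsp_DD tspace_tsc)
  then have h0: "eqv l (tmul (DD (i+1) i) (DD (j+1) j)) (tmul (DD i (i+1)) (DD j (j+1)))" by simp
  have "eqv l ?R (tmul (DD i (i+1)) (DD j (j+1)) + tmul (E (j+1) i) (E i (j+1)) - tmul (E j i) (E i j)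
     - tmul (E (j+1) (i+1)) (E (i+1) (j+1)) + tmul (E j (i+1)) (E (i+1) j))"
    unfolding Rfin_def by (intro eqv_add eqv_diff eqv_refl h0)
  then have "eqv l (?R - tmul (hh i) (hh j)) ((tmul (DD i (i+1)) (DD j (j+1)) + tmul (E (j+1) i) (E i (j+1)) - tmul (E j i) (E i j)
     - tmul (E (j+1) (i+1)) (E (i+1) (j+1)) + tmul (E j (i+1)) (E (i+1) j)) - tmul (hh i) (hh j))"
    by (intro eqv_diff eqv_refl)
  also have "\<dots> = ?L" by (simp add: hh_DD algebra_simps)
  finally have "eqv l (?R - tmul (hh i) (hh j)) ?L" .
  then have "?R - tmul (hh i) (hh j) \<in> leftN l" using L lN_eqv by blast
  then have "tsub ?R (tmul (hh i) (hh j)) \<in> leftN l" by (simp only: tsub_eq)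
  then show ?thesis using R0 unfolding inP0_def by blast
qed

lemma case2: assumes "l \<ge> 3" "1 \<le> k" "k + 2 \<le> l"
  shows "inP0 l (tmul (hh (k+1)) (tadd (tadd (tadd (hh k) (hh (k+1))) (hh (k+2))) tone))"
proof -
  have r: "rg l k" "rg l (k+1)" "rg l (k+2)" "rg l (k+3)" using assms by (auto simp: rg_def)
  have P: "Pm l (k+2) (k+3) (k+1) k" using reach[OF start[OF assms(1)] r(3) r(4) r(2) r(1)] assms by auto
  let ?R = "Rfin (k+2) (k+1) (k+3) k"
  have R0: "?R \<in> R0 l" using Rfin_R0[OF P] .
  let ?L = "tmul (E (k+2) k) (E k (k+2)) - tmul (E (k+3) (k+2)) (E (k+2) (k+3))
     - tmul (E (k+1) k) (E k (k+1)) + tmul (E (k+3) (k+1)) (E (k+1) (k+3))"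
  have L: "?L \<in> leftN l" using r assms by (intro lN_add lN_diff lN_gen) auto
  let ?S = "DD k (k+1) + DD (k+1) (k+2) + DD (k+2) (k+3)"
  have c1: "eqv l (DD k (k+1) + DD (k+1) (k+2)) (DD k (k+2))" using r by (intro DD_chain)
  have c2: "eqv l (DD k (k+2) + DD (k+2) (k+3)) (DD k (k+3))" using r by (intro DD_chain)
  have "eqv l ?S (DD k (k+2) + DD (k+2) (k+3))" using c1 by (intro eqv_add eqv_refl)
  then have "eqv l ?S (DD k (k+3))" using c2 eqv_trans by blast
  then have hS: "eqv l (DD k (k+3)) ?S" by (rule eqv_sym)
  have h0: "eqv l (tmul (DD (k+1) (k+2)) (DD k (k+3))) (tmul (DD (k+1) (k+2)) ?S)"
    using r hS by (intro eqv_mul_r tsp_DD)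
  have h1: "eqv l (tmul (E k (k+2)) (E (k+2) k)) (tmul (E (k+2) k) (E k (k+2)) + (DD k (k+1) + DD (k+1) (k+2)))"
  proof -
    have "eqv l (tmul (E k (k+2)) (E (k+2) k)) (tmul (E (k+2) k) (E k (k+2)) + DD k (k+2))"
      using r by (intro commD) auto
    also have "eqv l \<dots> (tmul (E (k+2) k) (E k (k+2)) + (DD k (k+1) + DD (k+1) (k+2)))"
      using eqv_sym[OF c1] by (intro eqv_add eqv_refl)
    finally show ?thesis .
  qed
  have h2: "eqv l (tmul (E k (k+1)) (E (k+1) k)) (tmul (E (k+1) k) (E k (k+1)) + DD k (k+1))"
    using r by (intro commD) auto
  have "eqv l ?R (tmul (DD (k+1) (k+2)) ?S + (tmul (E (k+2) k) (E k (k+2)) + (DD k (k+1) + DD (k+1) (k+2)))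
     - tmul (E (k+3) (k+2)) (E (k+2) (k+3)) - (tmul (E (k+1) k) (E k (k+1)) + DD k (k+1))
     + tmul (E (k+3) (k+1)) (E (k+1) (k+3)))"
    unfolding Rfin_def by (intro eqv_add eqv_diff eqv_refl h0 h1 h2)
  then have "eqv l (?R - tmul (hh (k+1)) (tadd (tadd (tadd (hh k) (hh (k+1))) (hh (k+2))) tone))
     ((tmul (DD (k+1) (k+2)) ?S + (tmul (E (k+2) k) (E k (k+2)) + (DD k (k+1) + DD (k+1) (k+2)))
     - tmul (E (k+3) (k+2)) (E (k+2) (k+3)) - (tmul (E (k+1) k) (E k (k+1)) + DD k (k+1))
     + tmul (E (k+3) (k+1)) (E (k+1) (k+3))) - tmul (hh (k+1)) (tadd (tadd (tadd (hh k) (hh (k+1))) (hh (k+2))) tone))"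
    by (intro eqv_diff eqv_refl)
  also have "\<dots> = ?L"
  proof -
    have e3: "k + 3 = Suc (Suc (Suc k))" by simp
    show ?thesis by (simp add: hh_DD e3 algebra_simps)
  qed
  finally have "eqv l (?R - tmul (hh (k+1)) (tadd (tadd (tadd (hh k) (hh (k+1))) (hh (k+2))) tone)) ?L" .
  then have "?R - tmul (hh (k+1)) (tadd (tadd (tadd (hh k) (hh (k+1))) (hh (k+2))) tone) \<in> leftN l"
    using L lN_eqv by blast
  then have "tsub ?R (tmul (hh (k+1)) (tadd (tadd (tadd (hh k) (hh (k+1))) (hh (k+2))) tone)) \<in> leftN l"
    by (simp only: tsub_eq)
  then show ?thesis using R0 unfolding inP0_def by blast
qed


theorem lemma5p3:
  fixes l :: nat
  assumes "l \<ge> 3"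
  shows "(\<forall>i j. 1 \<le> i \<and> i \<le> l - 2 \<and> i + 2 \<le> j \<and> j \<le> l \<longrightarrow>
             inP0 l (tmul (hh i) (hh j)))
       \<and> (\<forall>i. 2 \<le> i \<and> i \<le> l - 1 \<longrightarrow>
             inP0 l (tmul (hh i) (tadd (tadd (tadd (hh (i - 1)) (hh i)) (hh (i + 1))) tone)))"
proof (intro conjI allI impI)
  fix i j assume "1 \<le> i \<and> i \<le> l - 2 \<and> i + 2 \<le> j \<and> j \<le> l"
  then show "inP0 l (tmul (hh i) (hh j))" using case1[OF assms] by blast
next
  fix i assume h: "2 \<le> i \<and> i \<le> l - 1"
  then obtain k where k: "i = k + 1" "1 \<le> k" by (metis add.commute le_Suc_ex one_add_one add_le_cancel_left Suc_eq_plus1 le_add1 le_trans)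
  have "k + 2 \<le> l" using h k assms by auto
  then have "inP0 l (tmul (hh (k+1)) (tadd (tadd (tadd (hh k) (hh (k+1))) (hh (k+2))) tone))"
    using case2[OF assms k(2)] by blast
  moreover have "i - 1 = k" "i + 1 = k + 2" using k by auto
  ultimately show "inP0 l (tmul (hh i) (tadd (tadd (tadd (hh (i - 1)) (hh i)) (hh (i + 1))) tone))"
    using k by simp
qed

end
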